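(* Let $\gamma>0$ and let $K(x,y)=e^{-\gamma|x-y|^2}$ be the one-dimensional Gaussian kernel on $\mathbb{R}$. There exists a finite dataset $X\subset\mathbb{R}$ such that for every $D\in\mathbb{N}$ and every map $\phi=(\phi_1,\dots,\phi_D):X\to\mathbb{R}^D$ satisfying $\sum_{j=1}^D\phi_j(x)\phi_j(y)=K(x,y)$ for all $x,y\in X$, there exists a component $\phi_j$, $j\in[D]$, that is not monotonic on $X$ (i.e. $\phi_j$ is neither nondecreasing nor nonincreasing as a function on the ordered set $X$). *)

theory Defs
  imports "HOL-Analysis.Analysis"
begin

definition gauss_kernel :: "real \<Rightarrow> real \<Rightarrow> real \<Rightarrow> real" where
  "gauss_kernel \<gamma> x y = exp (- \<gamma> * \<bar>x - y\<bar>^2)"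

end

theory Submission
  imports Defs
begin

lemma mono_prod:
  fixes f :: "real \<Rightarrow> real"
  assumes "monotone_on X (\<le>) (\<le>) f \<or> monotone_on X (\<le>) (\<ge>) f"
    and "x \<in> X" "y \<in> X" "z \<in> X" "x \<le> y" "y \<le> z"
  shows "(f y - f x) * (f z - f y) \<ge> 0"
  using assms(1)
proof
  assume "monotone_on X (\<le>) (\<le>) f"
  then have "f x \<le> f y" "f y \<le> f z" using assms by (auto simp: monotone_on_def)
  then show ?thesis by simp
next
  assume "monotone_on X (\<le>) (\<ge>) f"
  then have "f x \<ge> f y" "f y \<ge> f z" using assms by (auto simp: monotone_on_def)
  then show ?thesis by (simp add: mult_nonpos_nonpos)
qed

theorem theorem2:
  fixes \<gamma> :: real
  assumes "\<gamma> > 0"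
  shows "\<exists>X :: real set. finite X \<and>
    (\<forall>(D::nat) (\<phi>::nat \<Rightarrow> real \<Rightarrow> real).
       (\<forall>x\<in>X. \<forall>y\<in>X. (\<Sum>j\<in>{1..D}. \<phi> j x * \<phi> j y) = gauss_kernel \<gamma> x y)
       \<longrightarrow> (\<exists>j\<in>{1..D}. \<not> monotone_on X (\<le>) (\<le>) (\<phi> j) \<and> \<not> monotone_on X (\<le>) (\<ge>) (\<phi> j)))"
proof -
  define d where "d = sqrt (1 / \<gamma>)"
  have d0: "d \<ge> 0" unfolding d_def using assms by simp
  have dd: "\<gamma> * d^2 = 1" unfolding d_def using assms by (simp add: less_imp_le)
  have K1: "gauss_kernel \<gamma> 0 d = exp (-1)" "gauss_kernel \<gamma> d (2*d) = exp (-1)"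
    unfolding gauss_kernel_def using dd d0 by (simp_all add: power2_eq_square)
  have K2: "gauss_kernel \<gamma> d d = 1" unfolding gauss_kernel_def by simp
  have K3: "gauss_kernel \<gamma> 0 (2*d) = exp (-4)"
  proof -
    have "\<gamma> * \<bar>0 - 2*d\<bar>^2 = 4 * (\<gamma> * d^2)" using d0 by (simp add: power2_eq_square)
    then show ?thesis unfolding gauss_kernel_def using dd by simp
  qed
  have e: "exp (-1::real) \<le> 1/2"
  proof -
    have "2 \<le> exp (1::real)" using exp_ge_add_one_self[of 1] by simp
    then show ?thesis by (simp add: exp_minus field_simps)
  qed
  have e4: "exp (-4::real) > 0" by simp
  let ?X = "{0, d, 2*d}"
  show ?thesis
  proof (intro exI[of _ ?X] conjI allI impI)
    show "finite ?X" by simp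
    fix D :: nat and \<phi> :: "nat \<Rightarrow> real \<Rightarrow> real"
    assume H: "\<forall>x\<in>?X. \<forall>y\<in>?X. (\<Sum>j\<in>{1..D}. \<phi> j x * \<phi> j y) = gauss_kernel \<gamma> x y"
    show "\<exists>j\<in>{1..D}. \<not> monotone_on ?X (\<le>) (\<le>) (\<phi> j) \<and> \<not> monotone_on ?X (\<le>) (\<ge>) (\<phi> j)"
    proof (rule ccontr)
      assume "\<not> ?thesis"
      then have M: "\<forall>j\<in>{1..D}. monotone_on ?X (\<le>) (\<le>) (\<phi> j) \<or> monotone_on ?X (\<le>) (\<ge>) (\<phi> j)"
        by blast
      have "0 \<le> (\<Sum>j\<in>{1..D}. (\<phi> j d - \<phi> j 0) * (\<phi> j (2*d) - \<phi> j d))"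
        by (rule sum_nonneg, rule mono_prod) (use M d0 in auto)
      also have "\<dots> = (\<Sum>j\<in>{1..D}. \<phi> j d * \<phi> j (2*d)) - (\<Sum>j\<in>{1..D}. \<phi> j d * \<phi> j d)
          - (\<Sum>j\<in>{1..D}. \<phi> j 0 * \<phi> j (2*d)) + (\<Sum>j\<in>{1..D}. \<phi> j 0 * \<phi> j d)"
        by (simp add: sum_subtractf sum.distrib algebra_simps)
      also have "\<dots> = exp (-1) - 1 - exp (-4) + exp (-1)"
        using H K1 K2 K3 by simp
      finally show False using e e4 by linarith
    qed
  qed
qed

end
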